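(* Let $f_1,f_2$ be strongly hyperbolic functions and let $p_1,p_2,p_3\in\mathcal{P}$ be three points in admissible position. Then at least one element of $\mathcal{C}^-(f_1,f_2)$ contains $p_1,p_2,p_3$.
   Context: Identify $\mathbb{S}^1$ with $\mathbb{R}\cup\{\infty\}$, $\mathcal{P}=\mathbb{S}^1\times\mathbb{S}^1$, $\mathbb{R}^+=(0,\infty)$. A function $f:\mathbb{R}^+\to\mathbb{R}^+$ is strongly hyperbolic if: (1) $\lim_{x\to0+}f(x)=+\infty$, $\lim_{x\to+\infty}f(x)=0$; (2) $f$ strictly convex; (3) $\lim_{x\to+\infty}f(x+b)/f(x)=1$ for each $b\in\mathbb{R}$; (4) $f$ differentiable; (5) $\ln|f'|$ strictly convex. For $a>0$, $b,c\in\mathbb{R}$: $f_{a,b,c}(x)=af_1(x+b)+c$ for $x>-b$, $f_{a,b,c}(x)=-af_2(-x-b)+c$ for $x<-b$; $\overline{f_{a,b,c}}=\{(x,f_{a,b,c}(x)):x\ne-b\}\cup\{(-b,\infty),(\infty,c)\}$; $\overline{l_{s,t}}=\{(x,sx+t):x\in\mathbb{R}\}\cup\{(\infty,\infty)\}$; $\mathcal{C}^-(f_1,f_2)=\{\overline{f_{a,b,c}}:a>0,b,c\in\mathbb{R}\}\cup\{\overline{l_{s,t}}:s<0,t\in\mathbb{R}\}$. Three points are in admissible position if they are all contained in one set of the form $\{(x,sx+t):x\in\mathbb{R}\}\cup\{(\infty,\infty)\}$ with $s<0$, $t\in\mathbb{R}$, or of the form $\{(x,y)\in\mathbb{R}^2:(x-b)(y-c)=a\}\cup\{(\infty,c),(b,\infty)\}$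 with $a>0$, $b,c\in\mathbb{R}$ (the orientation-reversing circles of the classical flat Minkowski plane). *)

theory Defs
  imports "HOL-Analysis.Analysis"
begin

text \<open>The circle S^1 identified with R together with a point at infinity.\<close>
datatype ext = Fin real | Infty

type_synonym point = "ext \<times> ext"

definition strictly_convex_on :: "real set \<Rightarrow> (real \<Rightarrow> real) \<Rightarrow> bool" where
  "strictly_convex_on S f \<longleftrightarrow> convex S \<and>
     (\<forall>x\<in>S. \<forall>y\<in>S. \<forall>u::real. x \<noteq> y \<and> 0 < u \<and> u < 1 \<longrightarrow>
        f (u * x + (1 - u) * y) < u * f x + (1 - u) * f y)"

text \<open>Strongly hyperbolic functions f : R+ -> R+ (only values on (0,inf) matter).\<close>
definition strongly_hyperbolic :: "(real \<Rightarrow> real) \<Rightarrow> bool" where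
  "strongly_hyperbolic f \<longleftrightarrow>
     (\<forall>x>0. f x > 0) \<and>
     filterlim f at_top (at_right 0) \<and>
     (f \<longlongrightarrow> 0) at_top \<and>
     strictly_convex_on {0<..} f \<and>
     (\<forall>b::real. ((\<lambda>x. f (x + b) / f x) \<longlongrightarrow> 1) at_top) \<and>
     (\<forall>x>0. f differentiable (at x)) \<and>
     strictly_convex_on {0<..} (\<lambda>x. ln \<bar>deriv f x\<bar>)"

definition f_abc :: "(real \<Rightarrow> real) \<Rightarrow> (real \<Rightarrow> real) \<Rightarrow> real \<Rightarrow> real \<Rightarrow> real \<Rightarrow> real \<Rightarrow> real" where
  "f_abc f1 f2 a b c x =
     (if x > - b then a * f1 (x + b) + c else - a * f2 (- x - b) + c)"

definition f_abc_closure :: "(real \<Rightarrow> real) \<Rightarrow> (real \<Rightarrow> real) \<Rightarrow> real \<Rightarrow> real \<Rightarrow> real \<Rightarrow> point set" where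
  "f_abc_closure f1 f2 a b c =
     {(Fin x, Fin (f_abc f1 f2 a b c x)) | x. x \<noteq> - b} \<union> {(Fin (- b), Infty), (Infty, Fin c)}"

definition line_closure :: "real \<Rightarrow> real \<Rightarrow> point set" where
  "line_closure s t = {(Fin x, Fin (s * x + t)) | x. True} \<union> {(Infty, Infty)}"

definition C_minus :: "(real \<Rightarrow> real) \<Rightarrow> (real \<Rightarrow> real) \<Rightarrow> point set set" where
  "C_minus f1 f2 =
     {f_abc_closure f1 f2 a b c | a b c. a > 0} \<union> {line_closure s t | s t. s < 0}"

text \<open>Orientation-reversing circles of the classical flat Minkowski plane.\<close>
definition hyperbola_closure :: "real \<Rightarrow> real \<Rightarrow> real \<Rightarrow> point set" where
  "hyperbola_closure a b c =
     {(Fin x, Fin y) | x y. (x - b) * (y - c) = a} \<union> {(Infty, Fin c), (Fin b, Infty)}"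

definition admissible_position :: "point \<Rightarrow> point \<Rightarrow> point \<Rightarrow> bool" where
  "admissible_position p1 p2 p3 \<longleftrightarrow>
     (\<exists>s t. s < 0 \<and> {p1, p2, p3} \<subseteq> line_closure s t) \<or>
     (\<exists>a b c. a > 0 \<and> {p1, p2, p3} \<subseteq> hyperbola_closure a b c)"

end

theory Submission
  imports Defs
begin

lemma sh_pos: "strongly_hyperbolic f \<Longrightarrow> 0 < x \<Longrightarrow> 0 < f x"
  by (simp add: strongly_hyperbolic_def)

lemma sh_cont: "strongly_hyperbolic f \<Longrightarrow> 0 < x \<Longrightarrow> isCont f x"
  unfolding strongly_hyperbolic_def by (meson differentiable_imp_continuous_within)

lemma sh_three:
  assumes "strongly_hyperbolic f" "0 < x" "x < y" "y < z"
  shows "(f y - f x)/(y-x) \<le> (f z - f x)/(z-x) \<and> (f z - f x)/(z-x) \<le> (f z - f y)/(z-y)"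
proof -
  define u where "u = (z-y)/(z-x)"
  have u: "0 < u" "u < 1" using assms by (auto simp: u_def divide_simps)
  have ue: "u * (z-x) = z - y" using assms unfolding u_def by simp
  have e: "u * x + (1-u) * z = y" using ue by (simp add: algebra_simps)
  have sc: "strictly_convex_on {0<..} f" using assms(1) by (simp add: strongly_hyperbolic_def)
  have "f (u * x + (1-u) * z) < u * f x + (1-u) * f z"
    using sc u assms unfolding strictly_convex_on_def by auto
  hence "f y < u * f x + (1-u) * f z" using e by simp
  hence "f y * (z-x) < (u * f x + (1-u) * f z) * (z-x)" using assms by simp
  also have "(u * f x + (1-u) * f z) * (z-x) = (u * (z-x)) * f x + (z-x) * f z - (u*(z-x)) * f z"
    by (simp add: algebra_simps)
  also have "\<dots> = (z-y) * f x + (y - x) * f z" unfolding ue by (simp add: algebra_simps)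
  finally have m: "f y * (z-x) < (z-y) * f x + (y - x) * f z" .
  have 1: "(f y - f x)/(y-x) \<le> (f z - f x)/(z-x)"
    using assms m by (simp add: divide_simps) (simp add: algebra_simps)
  have 2: "(f z - f x)/(z-x) \<le> (f z - f y)/(z-y)"
    using assms m by (simp add: divide_simps) (simp add: algebra_simps)
  show ?thesis using 1 2 by simp
qed

lemma sh_slope:
  assumes "strongly_hyperbolic f" "0 < a" "a < b" "c < e" "a \<le> c" "b \<le> e"
  shows "(f b - f a)/(b-a) \<le> (f e - f c)/(e-c)"
proof -
  have 1: "(f b - f a)/(b-a) \<le> (f e - f a)/(e-a)"
    using sh_three[OF assms(1), of a b e] assms by (cases "b = e") auto
  have 2: "(f e - f a)/(e-a) \<le> (f e - f c)/(e-c)"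
    using sh_three[OF assms(1), of a c e] assms by (cases "a = c") auto
  show ?thesis using 1 2 by linarith
qed

lemma sh_dec:
  assumes "strongly_hyperbolic f" "0 < x" "x < y"
  shows "f y < f x"
proof (rule ccontr)
  assume "\<not> f y < f x"
  hence nn: "0 \<le> (f y - f x)/(y-x)" using assms by simp
  have big: "f z \<ge> f y" if "z > y" for z
  proof -
    have "(f y - f x)/(y-x) \<le> (f z - f y)/(z-y)" using sh_three[OF assms(1), of x y z] assms that by auto
    hence "0 \<le> (f z - f y)/(z-y)" using nn by linarith
    thus ?thesis using that by (simp add: zero_le_divide_iff)
  qed
  have fy: "f y > 0" using sh_pos[OF assms(1)] assms by simp
  have "(f \<longlongrightarrow> 0) at_top" using assms(1) by (simp add: strongly_hyperbolic_def)
  hence "eventually (\<lambda>z. f z < f y) at_top" using fy by (simp add: order_tendstoD(2))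
  then obtain N where "\<forall>z\<ge>N. f z < f y" by (auto simp: eventually_at_top_linorder)
  hence "f (max N (y+1)) < f y" by simp
  moreover have "f (max N (y+1)) \<ge> f y" by (rule big) simp
  ultimately show False by simp
qed

lemma sh_small:
  assumes "strongly_hyperbolic f" "0 < eps"
  shows "\<exists>u. 0 < u \<and> u < eps \<and> f u > M"
proof -
  have "filterlim f at_top (at_right 0)" using assms(1) by (simp add: strongly_hyperbolic_def)
  hence "eventually (\<lambda>u. f u > M) (at_right 0)" by (simp add: filterlim_at_top_dense)
  then obtain b where b: "b > 0" "\<forall>y>0. y < b \<longrightarrow> f y > M" by (auto simp: eventually_at_right_field)
  show ?thesis using b assms(2) by (intro exI[of _ "min b eps / 2"]) auto
qed

lemma sh_large:
  assumes "strongly_hyperbolic f" "0 < eps"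
  shows "\<exists>X. \<forall>x\<ge>X. f x < eps"
proof -
  have "(f \<longlongrightarrow> 0) at_top" using assms(1) by (simp add: strongly_hyperbolic_def)
  hence "eventually (\<lambda>z. f z < eps) at_top" using assms by (simp add: order_tendstoD(2))
  thus ?thesis by (auto simp: eventually_at_top_linorder)
qed

lemma sh_ratio:
  assumes "strongly_hyperbolic f" "th < 1"
  shows "\<exists>X. \<forall>x\<ge>X. f (x + b) / f x > th"
proof -
  have "((\<lambda>x. f (x + b) / f x) \<longlongrightarrow> 1) at_top" using assms(1) by (simp add: strongly_hyperbolic_def)
  hence "eventually (\<lambda>x. f (x + b) / f x > th) at_top" using assms by (simp add: order_tendstoD(1))
  thus ?thesis by (auto simp: eventually_at_top_linorder)
qed

lemma core_decay:
  assumes sh: "strongly_hyperbolic f" and d1: "d1 > 0" and d2: "d2 > 0" and R: "R * d2 > d1"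
  shows "\<exists>u>0. f u - f (u + d1) < R * (f (u + d1) - f (u + (d1 + d2)))"
proof (rule ccontr)
  assume "\<not> ?thesis"
  hence H: "\<And>u. u > 0 \<Longrightarrow> R * (f (u + d1) - f (u + (d1 + d2))) \<le> f u - f (u + d1)" by force
  define d where "d = d1 + d2"
  define D where "D u = f u - f (u + d1)" for u
  define E where "E u = f (u + d1) - f (u + d)" for u
  define rho where "rho = R * d2 / d1"
  define M where "M = (1 + 1/R) / (rho - 1)"
  have Rpos: "R > 0" using R d1 d2 by (smt (verit) mult_nonpos_nonneg)
  have rho1: "rho > 1" using R d1 unfolding rho_def by (simp add: field_simps)
  have Mpos: "M > 0" using rho1 Rpos unfolding M_def by (simp add: field_simps add_pos_pos)
  have HE: "R * E u \<le> D u" if "u > 0" for u using H[OF that] unfolding D_def E_def d_def .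
  have Dpos: "D u > 0" if "u > 0" for u unfolding D_def using sh_dec[OF sh, of u "u+d1"] that d1 by simp
  have Epos: "E u > 0" if "u > 0" for u unfolding E_def d_def using sh_dec[OF sh, of "u+d1" "u+(d1+d2)"] that d1 d2 by simp
  have step1: "rho * D (u + d) \<le> D u" if u: "u > 0" for u
  proof -
    have "(f (u+d) - f (u+d1))/((u+d) - (u+d1)) \<le> (f (u+d+d1) - f (u+d))/((u+d+d1) - (u+d))"
      by (rule sh_slope[OF sh]) (use u d1 d2 in \<open>auto simp: d_def\<close>)
    hence "- E u / d2 \<le> - D (u+d) / d1" unfolding D_def E_def d_def by (simp add: algebra_simps)
    hence "D (u+d) * d2 \<le> E u * d1" using d1 d2 by (simp add: divide_simps)
    hence "R * (D (u+d) * d2) \<le> (R * E u) * d1" using Rpos by (simp add: mult_left_mono algebra_simps)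
    also have "\<dots> \<le> D u * d1" using HE[OF u] d1 by (simp add: mult_right_mono)
    finally have "(R * d2) * D (u+d) \<le> D u * d1" by (simp add: algebra_simps)
    thus ?thesis unfolding rho_def using d1 by (simp add: field_simps)
  qed
  have step2: "f u - f (u + d) \<le> (1 + 1/R) * D u" if u: "u > 0" for u
  proof -
    have "E u \<le> D u / R" using HE[OF u] Rpos by (simp add: field_simps)
    moreover have "f u - f (u + d) = D u + E u" unfolding D_def E_def by simp
    ultimately show ?thesis by (simp add: algebra_simps)
  qed
  have Mrho: "M * rho = 1 + 1/R + M" using rho1 Rpos unfolding M_def by (simp add: field_simps)
  have step3: "\<forall>u>0. f (u + d) - f (u + real (Suc N) * d) \<le> M * D u" for N
  proof (induction N)
    case 0
    then show ?case using Dpos Mpos by (simp add: less_imp_le)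
  next
    case (Suc N)
    show ?case
    proof (intro allI impI)
      fix u :: real assume u: "u > 0"
      have ud: "u + d > 0" using u d1 d2 d_def by simp
      have eq: "f (u + d) - f (u + real (Suc (Suc N)) * d) =
          (f (u + d) - f ((u + d) + d)) + (f ((u + d) + d) - f ((u + d) + real (Suc N) * d))"
        by (simp add: algebra_simps)
      have "\<dots> \<le> (1 + 1/R) * D (u + d) + M * D (u + d)"
        using step2[OF ud] Suc.IH ud by (smt (verit))
      also have "\<dots> = M * (rho * D (u + d))" by (simp add: Mrho mult.assoc[symmetric] algebra_simps)
      also have "\<dots> \<le> M * D u" using step1[OF u] Mpos by (simp add: mult_left_mono)
      finally show "f (u + d) - f (u + real (Suc (Suc N)) * d) \<le> M * D u" using eq by simp
    qed
  qed
  have step4: "f (u + d) \<le> M * D u" if u: "u > 0" for u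
  proof (rule ccontr)
    assume "\<not> ?thesis"
    hence "f (u + d) - M * D u > 0" by simp
    then obtain X where X: "\<forall>x\<ge>X. f x < f (u + d) - M * D u" using sh_large[OF sh] by blast
    define N where "N = nat \<lceil>X / d\<rceil>"
    have dpos: "d > 0" using d1 d2 d_def by simp
    have "X / d \<le> real N" unfolding N_def by linarith
    hence "X \<le> real N * d" using dpos by (simp add: field_simps)
    hence "X \<le> u + real (Suc N) * d" using u dpos by (simp add: algebra_simps)
    hence "f (u + real (Suc N) * d) < f (u + d) - M * D u" using X by blast
    moreover have "f (u + d) - f (u + real (Suc N) * d) \<le> M * D u" using step3 u by blast
    ultimately show False by simp
  qed
  define th where "th = M / (1 + M)"
  have th1: "th < 1" using Mpos unfolding th_def by simp
  obtain X where X: "\<forall>x\<ge>X. f (x + d) / f x > th" using sh_ratio[OF sh th1] by blast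
  define u where "u = max X 1"
  have u: "u > 0" "u \<ge> X" unfolding u_def by auto
  have fu: "f u > 0" using sh_pos[OF sh u(1)] .
  have "D u \<le> f u - f (u + d)" using Epos[OF u(1)] unfolding D_def E_def by simp
  hence "f (u + d) \<le> M * (f u - f (u + d))" using step4[OF u(1)] Mpos
    by (smt (verit) mult_left_mono)
  hence "f (u + d) * (1 + M) \<le> M * f u" by (simp add: algebra_simps)
  hence "f (u + d) / f u \<le> th" unfolding th_def using fu Mpos by (simp add: field_simps)
  with X u show False by force
qed

lemma hyp_ineq:
  fixes A B x1 x2 x3 :: real
  assumes A: "A > 0" and ord: "B < x1" "x1 < x2" "x2 < x3"
  shows "(A/(x1-B) - A/(x2-B)) * (x3 - x2) > (A/(x2-B) - A/(x3-B)) * (x2 - x1)"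
    "A/(x1-B) - A/(x2-B) > 0" "A/(x2-B) - A/(x3-B) > 0"
proof -
  define p q r where "p = x1 - B" and "q = x2 - B" and "r = x3 - B"
  have pqr: "0 < p" "p < q" "q < r" using ord by (simp_all add: p_def q_def r_def)
  have e1: "A/(x1-B) - A/(x2-B) = A * (q - p) / (p * q)" using pqr by (simp add: p_def q_def field_simps)
  have e2: "A/(x2-B) - A/(x3-B) = A * (r - q) / (q * r)" using pqr by (simp add: q_def r_def field_simps)
  have d1: "x2 - x1 = q - p" and d2: "x3 - x2 = r - q" by (auto simp: p_def q_def r_def)
  have k: "A * (q - p) * (r - q) / q > 0" using pqr A by simp
  have "A * (q - p) * (r - q) / q / r < A * (q - p) * (r - q) / q / p"
    using divide_strict_left_mono[of p r "A * (q - p) * (r - q) / q"] k pqr by simp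
  thus "(A/(x1-B) - A/(x2-B)) * (x3 - x2) > (A/(x2-B) - A/(x3-B)) * (x2 - x1)"
    unfolding e1 e2 d1 d2 by (simp add: field_simps)
  show "A/(x1-B) - A/(x2-B) > 0" unfolding e1 using pqr A by simp
  show "A/(x2-B) - A/(x3-B) > 0" unfolding e2 using pqr A by simp
qed

lemma isCont_shift: "isCont f (x + d::real) \<Longrightarrow> isCont (\<lambda>x. f (x + d)) x"
proof -
  assume a: "isCont f (x + d)"
  have "isCont (\<lambda>x. x + d) x" by (intro continuous_intros)
  from isCont_o2[OF this a] show ?thesis .
qed

lemma solve_RRR:
  assumes sh: "strongly_hyperbolic f" and A: "A > 0" and ord: "B < x1" "x1 < x2" "x2 < x3"
    and y: "y1 = Cc + A/(x1-B)" "y2 = Cc + A/(x2-B)" "y3 = Cc + A/(x3-B)"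
  shows "\<exists>a b c. a > 0 \<and> x1 + b > 0 \<and> a * f (x1 + b) + c = y1 \<and> a * f (x2 + b) + c = y2
     \<and> a * f (x3 + b) + c = y3"
proof -
  define d1 d2 where "d1 = x2 - x1" and "d2 = x3 - x2"
  have d1: "d1 > 0" and d2: "d2 > 0" using ord by (auto simp: d1_def d2_def)
  have h1: "(y1 - y2) * d2 > (y2 - y3) * d1" and y12: "y1 - y2 > 0" and y23: "y2 - y3 > 0"
    using hyp_ineq[OF A ord] y by (auto simp: d1_def d2_def)
  define R where "R = (y1 - y2) / (y2 - y3)"
  have Rpos: "R > 0" using y12 y23 by (simp add: R_def)
  have Rd: "R * d2 > d1" using h1 y23 by (simp add: R_def field_simps)
  define G where "G u = (f u - f (u + d1)) - R * (f (u + d1) - f (u + (d1 + d2)))" for u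
  obtain u1 where u1: "u1 > 0" "G u1 < 0" using core_decay[OF sh d1 d2 Rd] unfolding G_def by force
  define K where "K = f d1 - f (d1 + d2)"
  obtain u0 where u0: "0 < u0" "u0 < u1" "f u0 > f d1 + R * K" using sh_small[OF sh u1(1)] by blast
  have "(f (d1 + d2) - f d1) / ((d1 + d2) - d1) \<le> (f (u0 + (d1 + d2)) - f (u0 + d1)) / ((u0 + (d1 + d2)) - (u0 + d1))"
    by (rule sh_slope[OF sh]) (use d1 d2 u0 in auto)
  hence "f (u0 + d1) - f (u0 + (d1 + d2)) \<le> K" using d2 unfolding K_def by (simp add: divide_simps)
  hence "R * (f (u0 + d1) - f (u0 + (d1 + d2))) \<le> R * K" using Rpos by (simp add: mult_left_mono)
  moreover have "f (u0 + d1) < f d1" using sh_dec[OF sh, of d1 "u0 + d1"] d1 u0 by simp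
  ultimately have G0: "G u0 > 0" using u0 unfolding G_def by linarith
  have cont: "\<forall>x. u0 \<le> x \<and> x \<le> u1 \<longrightarrow> isCont G x"
  proof (intro allI impI)
    fix x assume "u0 \<le> x \<and> x \<le> u1"
    hence x: "x > 0" using u0 by simp
    have c0: "isCont f x" using sh_cont[OF sh x] .
    have c1: "isCont (\<lambda>x. f (x + d1)) x" by (rule isCont_shift, rule sh_cont[OF sh]) (use x d1 in simp)
    have c2: "isCont (\<lambda>x. f (x + (d1 + d2))) x" by (rule isCont_shift, rule sh_cont[OF sh]) (use x d1 d2 in simp)
    show "isCont G x" unfolding G_def using c0 c1 c2 by (intro continuous_intros)
  qed
  obtain u where u: "u0 \<le> u" "u \<le> u1" "G u = 0"
    using IVT2[of G u1 0 u0] u1 G0 u0 cont by force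
  have upos: "u > 0" using u u0 by simp
  define D E where "D = f u - f (u + d1)" and "E = f (u + d1) - f (u + (d1 + d2))"
  have Dpos: "D > 0" unfolding D_def using sh_dec[OF sh, of u "u + d1"] upos d1 by simp
  have DE: "D = R * E" using u(3) unfolding G_def D_def E_def by simp
  define a where "a = (y1 - y2) / D"
  define b where "b = u - x1"
  define c where "c = y1 - a * f u"
  have apos: "a > 0" using y12 Dpos by (simp add: a_def)
  have aD: "a * D = y1 - y2" using Dpos by (simp add: a_def)
  have aE: "a * E = y2 - y3"
  proof -
    have "a * E = (y1 - y2) * E / (R * E)" using DE by (simp add: a_def)
    also have "\<dots> = y2 - y3"
    proof -
      have "E \<noteq> 0" using DE Dpos by auto
      thus ?thesis using y12 y23 by (simp add: R_def field_simps)
    qed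
    finally show ?thesis .
  qed
  have e1: "x1 + b = u" and e2: "x2 + b = u + d1" and e3: "x3 + b = u + (d1 + d2)"
    by (auto simp: b_def d1_def d2_def)
  show ?thesis
  proof (intro exI conjI)
    show "a > 0" by (rule apos)
    show "x1 + b > 0" using e1 upos by simp
    show "a * f (x1 + b) + c = y1" unfolding e1 c_def by simp
    show "a * f (x2 + b) + c = y2" unfolding e2 c_def using aD unfolding D_def by (simp add: algebra_simps)
    show "a * f (x3 + b) + c = y3" unfolding e3 c_def using aD aE unfolding D_def E_def by (simp add: algebra_simps)
  qed
qed

lemma isCont_refl: "isCont f (d - x::real) \<Longrightarrow> isCont (\<lambda>x. f (d - x)) x"
proof -
  assume a: "isCont f (d - x)"
  have "isCont (\<lambda>x. d - x) x" by (intro continuous_intros)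
  from isCont_o2[OF this a] show ?thesis .
qed

lemma isCont_sub: "isCont f (x - d::real) \<Longrightarrow> isCont (\<lambda>x. f (x - d)) x"
proof -
  assume a: "isCont f (x - d)"
  have "isCont (\<lambda>x. x - d) x" by (intro continuous_intros)
  from isCont_o2[OF this a] show ?thesis .
qed

lemma solve_same2:
  assumes sh: "strongly_hyperbolic f" and A: "A > 0" and ord: "B < x1" "x1 < x2"
    and y: "y1 = Cc + A/(x1-B)" "y2 = Cc + A/(x2-B)"
  shows "\<exists>a b. a > 0 \<and> x1 + b > 0 \<and> a * f (x1 + b) + Cc = y1 \<and> a * f (x2 + b) + Cc = y2"
proof -
  define d where "d = x2 - x1"
  have d: "d > 0" using ord by (simp add: d_def)
  define r where "r = (y1 - Cc) / (y2 - Cc)"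
  have p1: "y1 - Cc > 0" and p2: "y2 - Cc > 0" using y ord A by auto
  have q1: "y1 - Cc = A/(x1-B)" and q2: "y2 - Cc = A/(x2-B)" using y by simp_all
  have r: "r = (x2 - B) / (x1 - B)" unfolding r_def q1 q2 using ord A by simp
  have r1: "r > 1" unfolding r using ord by simp
  define G where "G u = f u - r * f (u + d)" for u
  have th: "1 / r < 1" using r1 by simp
  obtain X where X: "\<forall>x\<ge>X. f (x + d) / f x > 1 / r" using sh_ratio[OF sh th] by blast
  define u1 where "u1 = max X 1"
  have u1: "u1 > 0" "u1 \<ge> X" unfolding u1_def by auto
  have "f (u1 + d) / f u1 > 1 / r" using X u1 by blast
  hence "G u1 < 0" using sh_pos[OF sh u1(1)] r1 unfolding G_def by (simp add: field_simps)
  obtain u0 where u0: "0 < u0" "u0 < u1" "f u0 > r * f d" using sh_small[OF sh u1(1)] by blast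
  have "f (u0 + d) < f d" using sh_dec[OF sh, of d "u0 + d"] d u0 by simp
  hence "G u0 > 0" using u0 r1 unfolding G_def by (smt (verit) mult_strict_left_mono)
  have cont: "\<forall>x. u0 \<le> x \<and> x \<le> u1 \<longrightarrow> isCont G x"
  proof (intro allI impI)
    fix x assume "u0 \<le> x \<and> x \<le> u1"
    hence x: "x > 0" using u0 by simp
    have c1: "isCont (\<lambda>x. f (x + d)) x" by (rule isCont_shift, rule sh_cont[OF sh]) (use x d in simp)
    show "isCont G x" unfolding G_def using sh_cont[OF sh x] c1 by (intro continuous_intros)
  qed
  obtain u where u: "u0 \<le> u" "u \<le> u1" "G u = 0"
    using IVT2[of G u1 0 u0] \<open>G u1 < 0\<close> \<open>G u0 > 0\<close> u0 cont by force
  have upos: "u > 0" using u u0 by simp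
  have fu: "f u > 0" using sh_pos[OF sh upos] .
  define a where "a = (y1 - Cc) / f u"
  define b where "b = u - x1"
  have e1: "x1 + b = u" and e2: "x2 + b = u + d" by (auto simp: b_def d_def)
  have G0: "f u = r * f (u + d)" using u(3) unfolding G_def by simp
  show ?thesis
  proof (intro exI conjI)
    show "a > 0" using p1 fu by (simp add: a_def)
    show "x1 + b > 0" using e1 upos by simp
    show "a * f (x1 + b) + Cc = y1" unfolding e1 a_def using fu by simp
    have fd: "f (u + d) > 0" using sh_pos[OF sh] upos d by simp
    have "a * f (u + d) = (y1 - Cc) * f (u + d) / (r * f (u + d))" unfolding a_def G0[symmetric] by simp
    also have "\<dots> = (y1 - Cc) / r" using fd by simp
    also have "\<dots> = y2 - Cc" using p1 p2 by (simp add: r_def)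
    finally show "a * f (x2 + b) + Cc = y2" unfolding e2 by simp
  qed
qed

lemma solve_cross2:
  assumes sh1: "strongly_hyperbolic f1" and sh2: "strongly_hyperbolic f2"
    and ord: "x1 < x2" and y: "y1 < Cc" "Cc < y2"
  shows "\<exists>a v. a > 0 \<and> x1 < v \<and> v < x2 \<and> - a * f2 (v - x1) + Cc = y1 \<and> a * f1 (x2 - v) + Cc = y2"
proof -
  define h where "h = (x2 - x1) / 2"
  have h: "h > 0" using ord by (simp add: h_def)
  define G where "G v = (Cc - y1) * f1 (x2 - v) - (y2 - Cc) * f2 (v - x1)" for v
  obtain s where s: "0 < s" "s < h" "f2 s > (Cc - y1) * f1 h / (y2 - Cc)" using sh_small[OF sh2 h] by blast
  obtain t where t: "0 < t" "t < h" "f1 t > (y2 - Cc) * f2 h / (Cc - y1)" using sh_small[OF sh1 h] by blast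
  define v0 v1 where "v0 = x1 + s" and "v1 = x2 - t"
  have v01: "v0 \<le> v1" using s t by (simp add: v0_def v1_def h_def)
  have "f1 (x2 - v0) \<le> f1 h" using sh_dec[OF sh1, of h "x2 - v0"] s h by (cases "x2 - v0 = h") (auto simp: v0_def h_def)
  hence "(Cc - y1) * f1 (x2 - v0) \<le> (Cc - y1) * f1 h" using y by (simp add: mult_left_mono)
  moreover have "(Cc - y1) * f1 h < (y2 - Cc) * f2 s" using s y by (simp add: field_simps)
  ultimately have G0: "G v0 \<le> 0" unfolding G_def v0_def by simp
  have "f2 (v1 - x1) \<le> f2 h" using sh_dec[OF sh2, of h "v1 - x1"] t h by (cases "v1 - x1 = h") (auto simp: v1_def h_def)
  hence "(y2 - Cc) * f2 (v1 - x1) \<le> (y2 - Cc) * f2 h" using y by (simp add: mult_left_mono)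
  moreover have "(y2 - Cc) * f2 h < (Cc - y1) * f1 t" using t y by (simp add: field_simps)
  ultimately have G1: "G v1 \<ge> 0" unfolding G_def v1_def by simp
  have cont: "\<forall>x. v0 \<le> x \<and> x \<le> v1 \<longrightarrow> isCont G x"
  proof (intro allI impI)
    fix x assume xx: "v0 \<le> x \<and> x \<le> v1"
    have c1: "isCont (\<lambda>x. f1 (x2 - x)) x" by (rule isCont_refl, rule sh_cont[OF sh1]) (use xx t in \<open>simp add: v1_def\<close>)
    have c2: "isCont (\<lambda>x. f2 (x - x1)) x" by (rule isCont_sub, rule sh_cont[OF sh2]) (use xx s in \<open>simp add: v0_def\<close>)
    show "isCont G x" unfolding G_def using c1 c2 by (intro continuous_intros)
  qed
  obtain v where v: "v0 \<le> v" "v \<le> v1" "G v = 0" using IVT[of G v0 0 v1] G0 G1 v01 cont by force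
  have vv: "x1 < v" "v < x2" using v s t by (auto simp: v0_def v1_def)
  have F1: "f1 (x2 - v) > 0" using sh_pos[OF sh1] vv by simp
  define a where "a = (y2 - Cc) / f1 (x2 - v)"
  have Geq: "(Cc - y1) * f1 (x2 - v) = (y2 - Cc) * f2 (v - x1)" using v(3) unfolding G_def by simp
  show ?thesis
  proof (intro exI conjI)
    show "a > 0" using F1 y by (simp add: a_def)
    show "x1 < v" "v < x2" by (rule vv)+
    show "a * f1 (x2 - v) + Cc = y2" using F1 by (simp add: a_def)
    have "a * f2 (v - x1) = Cc - y1" using F1 Geq unfolding a_def by (simp add: field_simps)
    thus "- a * f2 (v - x1) + Cc = y1" by simp
  qed
qed

lemma solve_LLR:
  assumes sh1: "strongly_hyperbolic f1" and sh2: "strongly_hyperbolic f2"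
    and ord: "x1 < x2" "x2 < x3" and y: "y2 < y1" "y1 < y3"
  shows "\<exists>a v c. a > 0 \<and> x2 < v \<and> v < x3 \<and> - a * f2 (v - x1) + c = y1 \<and> - a * f2 (v - x2) + c = y2
     \<and> a * f1 (x3 - v) + c = y3"
proof -
  define h where "h = (x3 - x2) / 2"
  have h: "h > 0" using ord by (simp add: h_def)
  define G where "G v = (y3 - y1) * f2 (v - x2) - (y3 - y2) * f2 (v - x1) - (y1 - y2) * f1 (x3 - v)" for v
  obtain s where s: "0 < s" "s < h"
    "f2 s > ((y3 - y2) * f2 (x2 - x1) + (y1 - y2) * f1 h) / (y3 - y1)" using sh_small[OF sh2 h] by blast
  obtain t where t: "0 < t" "t < h" "f1 t > (y3 - y1) * f2 h / (y1 - y2)" using sh_small[OF sh1 h] by blast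
  define v0 v1 where "v0 = x2 + s" and "v1 = x3 - t"
  have v01: "v0 \<le> v1" using s t by (simp add: v0_def v1_def h_def)
  have a1: "f2 (v0 - x1) \<le> f2 (x2 - x1)" using sh_dec[OF sh2, of "x2 - x1" "v0 - x1"] s ord
    by (simp add: v0_def less_imp_le)
  have a2: "f1 (x3 - v0) \<le> f1 h" using sh_dec[OF sh1, of h "x3 - v0"] s h
    by (cases "x3 - v0 = h") (auto simp: v0_def h_def)
  have "(y3 - y2) * f2 (v0 - x1) \<le> (y3 - y2) * f2 (x2 - x1)" using a1 y by (simp add: mult_left_mono)
  moreover have "(y1 - y2) * f1 (x3 - v0) \<le> (y1 - y2) * f1 h" using a2 y by (simp add: mult_left_mono)
  moreover have "(y3 - y2) * f2 (x2 - x1) + (y1 - y2) * f1 h < (y3 - y1) * f2 s" using s y by (simp add: field_simps)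
  ultimately have G0: "G v0 \<ge> 0" unfolding G_def v0_def by simp
  have b1: "f2 (v1 - x2) \<le> f2 h" using sh_dec[OF sh2, of h "v1 - x2"] t h by (cases "v1 - x2 = h") (auto simp: v1_def h_def)
  have b2: "f2 (v1 - x1) > 0" using sh_pos[OF sh2] t ord h by (simp add: v1_def h_def)
  have "(y3 - y1) * f2 (v1 - x2) \<le> (y3 - y1) * f2 h" using b1 y by (simp add: mult_left_mono)
  moreover have "(y3 - y1) * f2 h < (y1 - y2) * f1 t" using t y by (simp add: field_simps)
  moreover have "(y3 - y2) * f2 (v1 - x1) > 0" using b2 y by simp
  ultimately have G1: "G v1 \<le> 0" unfolding G_def v1_def by simp
  have cont: "\<forall>x. v0 \<le> x \<and> x \<le> v1 \<longrightarrow> isCont G x"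
  proof (intro allI impI)
    fix x assume xx: "v0 \<le> x \<and> x \<le> v1"
    have c1: "isCont (\<lambda>x. f1 (x3 - x)) x" by (rule isCont_refl, rule sh_cont[OF sh1]) (use xx t in \<open>simp add: v1_def\<close>)
    have c2: "isCont (\<lambda>x. f2 (x - x1)) x" by (rule isCont_sub, rule sh_cont[OF sh2]) (use xx s ord in \<open>simp add: v0_def\<close>)
    have c3: "isCont (\<lambda>x. f2 (x - x2)) x" by (rule isCont_sub, rule sh_cont[OF sh2]) (use xx s in \<open>simp add: v0_def\<close>)
    show "isCont G x" unfolding G_def using c1 c2 c3 by (intro continuous_intros)
  qed
  obtain v where v: "v0 \<le> v" "v \<le> v1" "G v = 0" using IVT2[of G v1 0 v0] G0 G1 v01 cont by force
  have vv: "x2 < v" "v < x3" using v s t by (auto simp: v0_def v1_def)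
  define F1 F2 g where "F1 = f2 (v - x1)" and "F2 = f2 (v - x2)" and "g = f1 (x3 - v)"
  have F12: "F1 < F2" unfolding F1_def F2_def using sh_dec[OF sh2, of "v - x2" "v - x1"] vv ord by simp
  define a where "a = (y1 - y2) / (F2 - F1)"
  define c where "c = y2 + a * F2"
  have Geq: "(y3 - y1) * F2 - (y3 - y2) * F1 - (y1 - y2) * g = 0" using v(3) unfolding G_def F1_def F2_def g_def by simp
  have aF: "a * (F2 - F1) = y1 - y2" using F12 by (simp add: a_def)
  have key: "(y1 - y2) * (g + F2) = (y3 - y2) * (F2 - F1)" using Geq by (simp add: algebra_simps)
  have ag: "a * (g + F2) = y3 - y2"
  proof -
    have "a * (g + F2) = (y1 - y2) * (g + F2) / (F2 - F1)" by (simp add: a_def)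
    also have "\<dots> = y3 - y2" unfolding key using F12 by simp
    finally show ?thesis .
  qed
  show ?thesis
  proof (intro exI conjI)
    show "a > 0" using F12 y by (simp add: a_def)
    show "x2 < v" "v < x3" by (rule vv)+
    show "- a * f2 (v - x1) + c = y1" using aF unfolding c_def F1_def[symmetric] by (simp add: algebra_simps)
    show "- a * f2 (v - x2) + c = y2" unfolding c_def F2_def[symmetric] by simp
    show "a * f1 (x3 - v) + c = y3" using ag unfolding c_def g_def[symmetric] by (simp add: algebra_simps)
  qed
qed

lemma cm: "a > 0 \<Longrightarrow> f_abc_closure f1 f2 a b c \<in> C_minus f1 f2"
  by (auto simp: C_minus_def)

lemma mem_Rb: "x > - b \<Longrightarrow> (Fin x, Fin (a * f1 (x + b) + c)) \<in> f_abc_closure f1 f2 a b c"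
  by (auto simp: f_abc_closure_def f_abc_def)

lemma mem_R: "v < x \<Longrightarrow> (Fin x, Fin (a * f1 (x - v) + c)) \<in> f_abc_closure f1 f2 a (- v) c"
  by (auto simp: f_abc_closure_def f_abc_def)

lemma mem_L: "x < v \<Longrightarrow> (Fin x, Fin (- a * f2 (v - x) + c)) \<in> f_abc_closure f1 f2 a (- v) c"
  by (auto simp: f_abc_closure_def f_abc_def)

lemma mem_I1: "(Infty, Fin c) \<in> f_abc_closure f1 f2 a b c"
  by (auto simp: f_abc_closure_def)

lemma mem_I2: "(Fin v, Infty) \<in> f_abc_closure f1 f2 a (- v) c"
  by (auto simp: f_abc_closure_def)

lemma hyp_mono:
  fixes A B x x' :: real
  assumes "A > 0" "x < x'" "B < x \<or> x' < B"
  shows "A/(x'-B) < A/(x-B)"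
proof -
  have "0 < (x'-B) * (x-B)" using assms(2,3) by (auto intro: mult_pos_pos mult_neg_neg)
  thus ?thesis using divide_strict_left_mono[of "x-B" "x'-B" A] assms by simp
qed

lemma hyp_sign:
  fixes A B x :: real
  assumes "A > 0"
  shows "B < x \<Longrightarrow> A/(x-B) > 0" "x < B \<Longrightarrow> A/(x-B) < 0"
  using assms by (auto simp: divide_pos_pos divide_pos_neg)

lemma G_II:
  assumes sh1: "strongly_hyperbolic f1" and sh2: "strongly_hyperbolic f2" and A: "A > 0" and x: "x \<noteq> B"
  shows "\<exists>C\<in>C_minus f1 f2. {(Infty, Fin Cc), (Fin B, Infty), (Fin x, Fin (Cc + A/(x-B)))} \<subseteq> C"
proof (cases "B < x")
  case True
  define a where "a = (A/(x-B)) / f1 (x - B)"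
  have f: "f1 (x - B) > 0" using sh_pos[OF sh1] True by simp
  have a: "a > 0" unfolding a_def using f hyp_sign(1)[OF A True] by (rule divide_pos_pos[rotated])
  have "(Fin x, Fin (a * f1 (x - B) + Cc)) \<in> f_abc_closure f1 f2 a (- B) Cc" by (rule mem_R) (use True in simp)
  moreover have "a * f1 (x - B) + Cc = Cc + A/(x-B)" using f by (simp add: a_def)
  ultimately show ?thesis using cm[OF a] mem_I1 mem_I2 by (intro bexI[of _ "f_abc_closure f1 f2 a (- B) Cc"]) auto
next
  case False
  hence F: "x < B" using x by simp
  define a where "a = - (A/(x-B)) / f2 (B - x)"
  have f: "f2 (B - x) > 0" using sh_pos[OF sh2] F by simp
  have a: "a > 0" unfolding a_def using f hyp_sign(2)[OF A F] by (intro divide_pos_pos) auto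
  have e: "- a * f2 (B - x) + Cc = Cc + A/(x-B)" using f by (simp add: a_def)
  have "(Fin x, Fin (Cc + A/(x-B))) \<in> f_abc_closure f1 f2 a (- B) Cc" unfolding e[symmetric] by (rule mem_L) (use F in simp)
  then show ?thesis using cm[OF a] mem_I1 mem_I2 by (intro bexI[of _ "f_abc_closure f1 f2 a (- B) Cc"]) auto
qed

lemma G_I1:
  assumes sh1: "strongly_hyperbolic f1" and sh2: "strongly_hyperbolic f2" and A: "A > 0"
    and x: "x1 \<noteq> B" "x2 \<noteq> B" "x1 < x2"
  shows "\<exists>C\<in>C_minus f1 f2. {(Infty, Fin Cc), (Fin x1, Fin (Cc + A/(x1-B))), (Fin x2, Fin (Cc + A/(x2-B)))} \<subseteq> C"
proof -
  consider "B < x1" | "x2 < B" | "x1 < B \<and> B < x2" using x by linarith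
  thus ?thesis
  proof cases
    case 1
    obtain a b where ab: "a > 0" "x1 + b > 0" "a * f1 (x1 + b) + Cc = Cc + A/(x1-B)" "a * f1 (x2 + b) + Cc = Cc + A/(x2-B)"
      using solve_same2[OF sh1 A 1 x(3), of "Cc + A/(x1-B)" Cc "Cc + A/(x2-B)"] by auto
    have "(Fin x1, Fin (a * f1 (x1 + b) + Cc)) \<in> f_abc_closure f1 f2 a b Cc" by (rule mem_Rb) (use ab in simp)
    moreover have "(Fin x2, Fin (a * f1 (x2 + b) + Cc)) \<in> f_abc_closure f1 f2 a b Cc" by (rule mem_Rb) (use ab x in simp)
    ultimately show ?thesis using cm[OF ab(1)] mem_I1 ab by (intro bexI[of _ "f_abc_closure f1 f2 a b Cc"]) auto
  next
    case 2
    have o: "- B < - x2" "- x2 < - x1" using 2 x by auto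
    obtain a b where ab: "a > 0" "- x2 + b > 0" "a * f2 (- x2 + b) + - Cc = - Cc + A/(- x2 - - B)"
        "a * f2 (- x1 + b) + - Cc = - Cc + A/(- x1 - - B)"
      using solve_same2[OF sh2 A o, of "- Cc + A/(- x2 - - B)" "- Cc" "- Cc + A/(- x1 - - B)"] by auto
    have n: "A/(- x - - B) = - (A/(x-B))" for x by (metis minus_diff_eq divide_minus_right diff_minus_eq_add uminus_add_conv_diff)
    have e1: "- a * f2 (b - x1) + Cc = Cc + A/(x1-B)" using ab(4) unfolding n by (simp add: algebra_simps)
    have e2: "- a * f2 (b - x2) + Cc = Cc + A/(x2-B)" using ab(3) unfolding n by (simp add: algebra_simps)
    have "(Fin x1, Fin (Cc + A/(x1-B))) \<in> f_abc_closure f1 f2 a (- b) Cc" unfolding e1[symmetric] by (rule mem_L) (use ab x in simp)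
    moreover have "(Fin x2, Fin (Cc + A/(x2-B))) \<in> f_abc_closure f1 f2 a (- b) Cc" unfolding e2[symmetric] by (rule mem_L) (use ab in simp)
    ultimately show ?thesis using cm[OF ab(1)] mem_I1 by (intro bexI[of _ "f_abc_closure f1 f2 a (- b) Cc"]) auto
  next
    case 3
    have y: "Cc + A/(x1-B) < Cc" "Cc < Cc + A/(x2-B)" using hyp_sign[OF A] 3 by auto
    obtain a v where av: "a > 0" "x1 < v" "v < x2" "- a * f2 (v - x1) + Cc = Cc + A/(x1-B)" "a * f1 (x2 - v) + Cc = Cc + A/(x2-B)"
      using solve_cross2[OF sh1 sh2 x(3) y] by blast
    have "(Fin x1, Fin (Cc + A/(x1-B))) \<in> f_abc_closure f1 f2 a (- v) Cc" unfolding av(4)[symmetric] by (rule mem_L) (use av in simp)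
    moreover have "(Fin x2, Fin (a * f1 (x2 - v) + Cc)) \<in> f_abc_closure f1 f2 a (- v) Cc" by (rule mem_R) (use av in simp)
    ultimately show ?thesis using cm[OF av(1)] mem_I1 av by (intro bexI[of _ "f_abc_closure f1 f2 a (- v) Cc"]) auto
  qed
qed

lemma G_I2:
  assumes sh1: "strongly_hyperbolic f1" and sh2: "strongly_hyperbolic f2" and A: "A > 0"
    and x: "x1 \<noteq> B" "x2 \<noteq> B" "x1 < x2"
  shows "\<exists>C\<in>C_minus f1 f2. {(Fin B, Infty), (Fin x1, Fin (Cc + A/(x1-B))), (Fin x2, Fin (Cc + A/(x2-B)))} \<subseteq> C"
proof -
  define y1 y2 where "y1 = Cc + A/(x1-B)" and "y2 = Cc + A/(x2-B)"
  consider "B < x1" | "x2 < B" | "x1 < B \<and> B < x2" using x by linarith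
  hence "\<exists>C\<in>C_minus f1 f2. {(Fin B, Infty), (Fin x1, Fin y1), (Fin x2, Fin y2)} \<subseteq> C"
  proof cases
    case 1
    have yy: "y2 < y1" using hyp_mono[OF A x(3)] 1 by (simp add: y1_def y2_def)
    have ff: "f1 (x2 - B) < f1 (x1 - B)" using sh_dec[OF sh1, of "x1 - B" "x2 - B"] 1 x by simp
    define a where "a = (y1 - y2) / (f1 (x1 - B) - f1 (x2 - B))"
    define c where "c = y1 - a * f1 (x1 - B)"
    have a: "a > 0" using yy ff by (simp add: a_def)
    have aa: "a * (f1 (x1 - B) - f1 (x2 - B)) = y1 - y2" using ff by (simp add: a_def)
    have e1: "a * f1 (x1 - B) + c = y1" by (simp add: c_def)
    have e2: "a * f1 (x2 - B) + c = y2" using aa by (simp add: c_def algebra_simps)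
    have "(Fin x1, Fin y1) \<in> f_abc_closure f1 f2 a (- B) c" unfolding e1[symmetric] by (rule mem_R) (use 1 in simp)
    moreover have "(Fin x2, Fin y2) \<in> f_abc_closure f1 f2 a (- B) c" unfolding e2[symmetric] by (rule mem_R) (use 1 x in simp)
    ultimately show ?thesis using cm[OF a] mem_I2 by (intro bexI[of _ "f_abc_closure f1 f2 a (- B) c"]) auto
  next
    case 2
    have yy: "y2 < y1" using hyp_mono[OF A x(3)] 2 by (simp add: y1_def y2_def)
    have ff: "f2 (B - x1) < f2 (B - x2)" using sh_dec[OF sh2, of "B - x2" "B - x1"] 2 x by simp
    define a where "a = (y1 - y2) / (f2 (B - x2) - f2 (B - x1))"
    define c where "c = y1 + a * f2 (B - x1)"
    have a: "a > 0" using yy ff by (simp add: a_def)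
    have aa: "a * (f2 (B - x2) - f2 (B - x1)) = y1 - y2" using ff by (simp add: a_def)
    have e1: "- a * f2 (B - x1) + c = y1" by (simp add: c_def)
    have e2: "- a * f2 (B - x2) + c = y2" using aa by (simp add: c_def algebra_simps)
    have "(Fin x1, Fin y1) \<in> f_abc_closure f1 f2 a (- B) c" unfolding e1[symmetric] by (rule mem_L) (use 2 x in simp)
    moreover have "(Fin x2, Fin y2) \<in> f_abc_closure f1 f2 a (- B) c" unfolding e2[symmetric] by (rule mem_L) (use 2 in simp)
    ultimately show ?thesis using cm[OF a] mem_I2 by (intro bexI[of _ "f_abc_closure f1 f2 a (- B) c"]) auto
  next
    case 3
    have yy: "y1 < y2" using hyp_sign(1)[OF A, of B x2] hyp_sign(2)[OF A, of x1 B] 3 by (simp add: y1_def y2_def)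
    have ff: "f1 (x2 - B) + f2 (B - x1) > 0" using sh_pos[OF sh1, of "x2 - B"] sh_pos[OF sh2, of "B - x1"] 3 by simp
    define a where "a = (y2 - y1) / (f1 (x2 - B) + f2 (B - x1))"
    define c where "c = y2 - a * f1 (x2 - B)"
    have a: "a > 0" using yy ff by (simp add: a_def)
    have aa: "a * (f1 (x2 - B) + f2 (B - x1)) = y2 - y1" using ff by (simp add: a_def)
    have e1: "- a * f2 (B - x1) + c = y1" using aa by (simp add: c_def algebra_simps)
    have e2: "a * f1 (x2 - B) + c = y2" by (simp add: c_def)
    have "(Fin x1, Fin y1) \<in> f_abc_closure f1 f2 a (- B) c" unfolding e1[symmetric] by (rule mem_L) (use 3 in simp)
    moreover have "(Fin x2, Fin y2) \<in> f_abc_closure f1 f2 a (- B) c" unfolding e2[symmetric] by (rule mem_R) (use 3 in simp)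
    ultimately show ?thesis using cm[OF a] mem_I2 by (intro bexI[of _ "f_abc_closure f1 f2 a (- B) c"]) auto
  qed
  thus ?thesis by (simp add: y1_def y2_def)
qed

lemma G_3:
  assumes sh1: "strongly_hyperbolic f1" and sh2: "strongly_hyperbolic f2" and A: "A > 0"
    and x: "x1 \<noteq> B" "x2 \<noteq> B" "x3 \<noteq> B" "x1 < x2" "x2 < x3"
  shows "\<exists>C\<in>C_minus f1 f2. {(Fin x1, Fin (Cc + A/(x1-B))), (Fin x2, Fin (Cc + A/(x2-B))), (Fin x3, Fin (Cc + A/(x3-B)))} \<subseteq> C"
proof -
  define y1 y2 y3 where "y1 = Cc + A/(x1-B)" and "y2 = Cc + A/(x2-B)" and "y3 = Cc + A/(x3-B)"
  have n: "A/(- x - - B) = - (A/(x-B))" for x by (metis minus_diff_eq divide_minus_right diff_minus_eq_add uminus_add_conv_diff)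
  consider "B < x1" | "x3 < B" | "x2 < B \<and> B < x3" | "x1 < B \<and> B < x2" using x by linarith
  hence "\<exists>C\<in>C_minus f1 f2. {(Fin x1, Fin y1), (Fin x2, Fin y2), (Fin x3, Fin y3)} \<subseteq> C"
  proof cases
    case 1
    obtain a b c where abc: "a > 0" "x1 + b > 0" "a * f1 (x1 + b) + c = y1" "a * f1 (x2 + b) + c = y2"
       "a * f1 (x3 + b) + c = y3"
      using solve_RRR[OF sh1 A 1 x(4,5) y1_def y2_def y3_def] by blast
    have "(Fin x1, Fin y1) \<in> f_abc_closure f1 f2 a b c" unfolding abc(3)[symmetric] by (rule mem_Rb) (use abc in simp)
    moreover have "(Fin x2, Fin y2) \<in> f_abc_closure f1 f2 a b c" unfolding abc(4)[symmetric] by (rule mem_Rb) (use abc x in simp)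
    moreover have "(Fin x3, Fin y3) \<in> f_abc_closure f1 f2 a b c" unfolding abc(5)[symmetric] by (rule mem_Rb) (use abc x in simp)
    ultimately show ?thesis using cm[OF abc(1)] by (intro bexI[of _ "f_abc_closure f1 f2 a b c"]) auto
  next
    case 2
    have o: "- B < - x3" "- x3 < - x2" "- x2 < - x1" using 2 x by auto
    obtain a b c where abc: "a > 0" "- x3 + b > 0" "a * f2 (- x3 + b) + c = - Cc + A/(- x3 - - B)"
       "a * f2 (- x2 + b) + c = - Cc + A/(- x2 - - B)" "a * f2 (- x1 + b) + c = - Cc + A/(- x1 - - B)"
      using solve_RRR[OF sh2 A o, of "- Cc + A/(- x3 - - B)" "- Cc" "- Cc + A/(- x2 - - B)" "- Cc + A/(- x1 - - B)"]
      by blast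
    have e1: "- a * f2 (b - x1) + - c = y1" using abc(5) unfolding n y1_def by (simp add: algebra_simps)
    have e2: "- a * f2 (b - x2) + - c = y2" using abc(4) unfolding n y2_def by (simp add: algebra_simps)
    have e3: "- a * f2 (b - x3) + - c = y3" using abc(3) unfolding n y3_def by (simp add: algebra_simps)
    have "(Fin x1, Fin y1) \<in> f_abc_closure f1 f2 a (- b) (- c)" unfolding e1[symmetric] by (rule mem_L) (use abc x in simp)
    moreover have "(Fin x2, Fin y2) \<in> f_abc_closure f1 f2 a (- b) (- c)" unfolding e2[symmetric] by (rule mem_L) (use abc x in simp)
    moreover have "(Fin x3, Fin y3) \<in> f_abc_closure f1 f2 a (- b) (- c)" unfolding e3[symmetric] by (rule mem_L) (use abc in simp)
    ultimately show ?thesis using cm[OF abc(1)] by (intro bexI[of _ "f_abc_closure f1 f2 a (- b) (- c)"]) auto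
  next
    case 3
    have yy: "y2 < y1" "y1 < y3"
      using hyp_mono[OF A x(4)] hyp_sign(1)[OF A, of B x3] hyp_sign(2)[OF A, of x1 B] 3 x
      by (auto simp: y1_def y2_def y3_def)
    obtain a v c where avc: "a > 0" "x2 < v" "v < x3" "- a * f2 (v - x1) + c = y1" "- a * f2 (v - x2) + c = y2"
       "a * f1 (x3 - v) + c = y3"
      using solve_LLR[OF sh1 sh2 x(4,5) yy] by blast
    have "(Fin x1, Fin y1) \<in> f_abc_closure f1 f2 a (- v) c" unfolding avc(4)[symmetric] by (rule mem_L) (use avc x in simp)
    moreover have "(Fin x2, Fin y2) \<in> f_abc_closure f1 f2 a (- v) c" unfolding avc(5)[symmetric] by (rule mem_L) (use avc in simp)
    moreover have "(Fin x3, Fin y3) \<in> f_abc_closure f1 f2 a (- v) c" unfolding avc(6)[symmetric] by (rule mem_R) (use avc in simp)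
    ultimately show ?thesis using cm[OF avc(1)] by (intro bexI[of _ "f_abc_closure f1 f2 a (- v) c"]) auto
  next
    case 4
    have yy: "- y2 < - y3" "- y3 < - y1"
      using hyp_mono[OF A x(5)] hyp_sign(1)[OF A, of B x3] hyp_sign(2)[OF A, of x1 B] 4 x
      by (auto simp: y1_def y2_def y3_def)
    have o: "- x3 < - x2" "- x2 < - x1" using x by auto
    obtain a V C where avc: "a > 0" "- x2 < V" "V < - x1" "- a * f1 (V - - x3) + C = - y3"
       "- a * f1 (V - - x2) + C = - y2" "a * f2 (- x1 - V) + C = - y1"
      using solve_LLR[OF sh2 sh1 o yy] by blast
    have ee: "- V - x1 = - x1 - V" by simp
    have e1: "- a * f2 (- V - x1) + - C = y1" using avc(6) unfolding ee by (simp add: algebra_simps)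
    have e2: "a * f1 (x2 - - V) + - C = y2" using avc(5) by (simp add: algebra_simps)
    have e3: "a * f1 (x3 - - V) + - C = y3" using avc(4) by (simp add: algebra_simps)
    have "(Fin x1, Fin y1) \<in> f_abc_closure f1 f2 a (- (- V)) (- C)" unfolding e1[symmetric] by (rule mem_L) (use avc in simp)
    moreover have "(Fin x2, Fin y2) \<in> f_abc_closure f1 f2 a (- (- V)) (- C)" unfolding e2[symmetric] by (rule mem_R) (use avc in simp)
    moreover have "(Fin x3, Fin y3) \<in> f_abc_closure f1 f2 a (- (- V)) (- C)" unfolding e3[symmetric] by (rule mem_R) (use avc x in simp)
    ultimately show ?thesis using cm[OF avc(1)] by (intro bexI[of _ "f_abc_closure f1 f2 a (- (- V)) (- C)"]) auto
  qed
  thus ?thesis by (simp add: y1_def y2_def y3_def)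
qed

definition goodS :: "(real \<Rightarrow> real) \<Rightarrow> (real \<Rightarrow> real) \<Rightarrow> point set \<Rightarrow> bool" where
  "goodS f1 f2 S \<longleftrightarrow> (\<exists>C\<in>C_minus f1 f2. S \<subseteq> C)"

lemma perm12: "goodS f1 f2 {a, b, c} \<Longrightarrow> goodS f1 f2 {b, a, c}"
proof -
  have "{b, a, c} = {a, b, c}" by blast
  thus "goodS f1 f2 {a, b, c} \<Longrightarrow> goodS f1 f2 {b, a, c}" by simp
qed

lemma perm23: "goodS f1 f2 {a, b, c} \<Longrightarrow> goodS f1 f2 {a, c, b}"
proof -
  have "{a, c, b} = {a, b, c}" by blast
  thus "goodS f1 f2 {a, b, c} \<Longrightarrow> goodS f1 f2 {a, c, b}" by simp
qed

lemma rot1: "goodS f1 f2 {a, b, c} \<Longrightarrow> goodS f1 f2 {c, a, b}"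
proof -
  have "{c, a, b} = {a, b, c}" by blast
  thus "goodS f1 f2 {a, b, c} \<Longrightarrow> goodS f1 f2 {c, a, b}" by simp
qed

lemma rot2: "goodS f1 f2 {a, b, c} \<Longrightarrow> goodS f1 f2 {b, c, a}"
proof -
  have "{b, c, a} = {a, b, c}" by blast
  thus "goodS f1 f2 {a, b, c} \<Longrightarrow> goodS f1 f2 {b, c, a}" by simp
qed

lemma rev3: "goodS f1 f2 {a, b, c} \<Longrightarrow> goodS f1 f2 {c, b, a}"
proof -
  have "{c, b, a} = {a, b, c}" by blast
  thus "goodS f1 f2 {a, b, c} \<Longrightarrow> goodS f1 f2 {c, b, a}" by simp
qed

lemma G_I1s:
  assumes "strongly_hyperbolic f1" "strongly_hyperbolic f2" "A > 0" "x1 \<noteq> B" "x2 \<noteq> B" "x1 \<noteq> x2"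
  shows "goodS f1 f2 {(Infty, Fin Cc), (Fin x1, Fin (Cc + A/(x1-B))), (Fin x2, Fin (Cc + A/(x2-B)))}"
proof (cases "x1 < x2")
  case True thus ?thesis using G_I1[OF assms(1-5) True] by (simp add: goodS_def)
next
  case False hence lt: "x2 < x1" using assms by simp
  have "goodS f1 f2 {(Infty, Fin Cc), (Fin x2, Fin (Cc + A/(x2-B))), (Fin x1, Fin (Cc + A/(x1-B)))}"
    using G_I1[OF assms(1-3,5,4) lt, of Cc] by (simp add: goodS_def)
  thus ?thesis by (rule perm23)
qed

lemma G_I2s:
  assumes "strongly_hyperbolic f1" "strongly_hyperbolic f2" "A > 0" "x1 \<noteq> B" "x2 \<noteq> B" "x1 \<noteq> x2"
  shows "goodS f1 f2 {(Fin B, Infty), (Fin x1, Fin (Cc + A/(x1-B))), (Fin x2, Fin (Cc + A/(x2-B)))}"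
proof (cases "x1 < x2")
  case True thus ?thesis using G_I2[OF assms(1-5) True] by (simp add: goodS_def)
next
  case False hence lt: "x2 < x1" using assms by simp
  have "goodS f1 f2 {(Fin B, Infty), (Fin x2, Fin (Cc + A/(x2-B))), (Fin x1, Fin (Cc + A/(x1-B)))}"
    using G_I2[OF assms(1-3,5,4) lt, of Cc] by (simp add: goodS_def)
  thus ?thesis by (rule perm23)
qed

lemma G_3s:
  assumes sh: "strongly_hyperbolic f1" "strongly_hyperbolic f2" "A > 0" and x: "x1 \<noteq> B" "x2 \<noteq> B" "x3 \<noteq> B"
    and d: "x1 \<noteq> x2" "x1 \<noteq> x3" "x2 \<noteq> x3"
  shows "goodS f1 f2 {(Fin x1, Fin (Cc + A/(x1-B))), (Fin x2, Fin (Cc + A/(x2-B))), (Fin x3, Fin (Cc + A/(x3-B)))}"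
proof -
  have g: "goodS f1 f2 {(Fin u1, Fin (Cc + A/(u1-B))), (Fin u2, Fin (Cc + A/(u2-B))), (Fin u3, Fin (Cc + A/(u3-B)))}"
    if "u1 \<noteq> B" "u2 \<noteq> B" "u3 \<noteq> B" "u1 < u2" "u2 < u3" for u1 u2 u3
    using G_3[OF sh that] unfolding goodS_def .
  consider "x1 < x2" "x2 < x3" | "x1 < x3" "x3 < x2" | "x2 < x1" "x1 < x3" | "x2 < x3" "x3 < x1"
    | "x3 < x1" "x1 < x2" | "x3 < x2" "x2 < x1" using d by linarith
  thus ?thesis
  proof cases
    case 1 thus ?thesis using g x by blast
  next
    case 2 thus ?thesis using perm23[OF g[of x1 x3 x2]] x by blast
  next
    case 3 thus ?thesis using perm12[OF g[of x2 x1 x3]] x by blast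
  next
    case 4 thus ?thesis using perm12[OF perm23[OF g[of x2 x3 x1]]] x by blast
  next
    case 5 thus ?thesis using perm23[OF perm12[OF g[of x3 x1 x2]]] x by blast
  next
    case 6 thus ?thesis using perm23[OF perm12[OF perm23[OF g[of x3 x2 x1]]]] x by blast
  qed
qed

lemma G_IIs:
  assumes "strongly_hyperbolic f1" "strongly_hyperbolic f2" "A > 0" "x \<noteq> B"
  shows "goodS f1 f2 {(Infty, Fin Cc), (Fin B, Infty), (Fin x, Fin (Cc + A/(x-B)))}"
  using G_II[OF assms] by (simp add: goodS_def)

lemma hyp_pt:
  assumes "p \<in> hyperbola_closure A B Cc" "A > 0"
  shows "p = (Infty, Fin Cc) \<or> p = (Fin B, Infty) \<or> (\<exists>x. x \<noteq> B \<and> p = (Fin x, Fin (Cc + A/(x-B))))"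
proof -
  { fix x y assume p: "p = (Fin x, Fin y)" and e: "(x - B) * (y - Cc) = A"
    have xb: "x \<noteq> B" using e assms(2) by auto
    have "y = Cc + A/(x-B)" using e xb by (simp add: field_simps)
    hence ?thesis using p xb by blast }
  thus ?thesis using assms(1) unfolding hyperbola_closure_def by blast
qed

theorem theorem4p2:
  fixes f1 f2 :: "real \<Rightarrow> real" and p1 p2 p3 :: point
  assumes "strongly_hyperbolic f1" and "strongly_hyperbolic f2"
    and "distinct [p1, p2, p3]"
    and "admissible_position p1 p2 p3"
  shows "\<exists>C\<in>C_minus f1 f2. {p1, p2, p3} \<subseteq> C"
proof -
  note sh = assms(1,2)
  from assms(4) consider (line) s t where "s < 0" "{p1, p2, p3} \<subseteq> line_closure s t"
    | (hyp) A B Cc where "A > 0" "{p1, p2, p3} \<subseteq> hyperbola_closure A B Cc"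
    unfolding admissible_position_def by blast
  thus ?thesis
  proof cases
    case line
    have "line_closure s t \<in> C_minus f1 f2" using line(1) by (auto simp: C_minus_def)
    thus ?thesis using line(2) by blast
  next
    case hyp
    have q1: "p1 = (Infty, Fin Cc) \<or> p1 = (Fin B, Infty) \<or> (\<exists>x. x \<noteq> B \<and> p1 = (Fin x, Fin (Cc + A/(x-B))))"
      using hyp_pt[OF _ hyp(1)] hyp(2) by blast
    have q2: "p2 = (Infty, Fin Cc) \<or> p2 = (Fin B, Infty) \<or> (\<exists>x. x \<noteq> B \<and> p2 = (Fin x, Fin (Cc + A/(x-B))))"
      using hyp_pt[OF _ hyp(1)] hyp(2) by blast
    have q3: "p3 = (Infty, Fin Cc) \<or> p3 = (Fin B, Infty) \<or> (\<exists>x. x \<noteq> B \<and> p3 = (Fin x, Fin (Cc + A/(x-B))))"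
      using hyp_pt[OF _ hyp(1)] hyp(2) by blast
    have "goodS f1 f2 {p1, p2, p3}"
      using q1 q2 q3 assms(3)
      apply (elim disjE exE conjE)
      apply (simp_all only: distinct.simps list.set insert_iff empty_iff prod.inject ext.inject ext.distinct simp_thms)
      apply (auto simp: G_IIs[OF sh hyp(1)] G_I1s[OF sh hyp(1)] G_I2s[OF sh hyp(1)] G_3s[OF sh hyp(1)] intro: perm12 perm23 rot1 rot2 rev3)
      done
    thus ?thesis by (simp add: goodS_def)
  qed
qed

end
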